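(* Let $g\colon(\mathbb R^+,0)\to(\mathbb R^+,0)$ be a germ of a $C^2$-smooth function such that $g(y)=y+R(y)$ with $R(y)=O(y^2)$, and let $h(x)=-\frac{1}{\ln x}$ (so $h^{-1}(y)=e^{-1/y}$). Then $H=h^{-1}\circ g\circ h$ (with $H(0)=0$) is $C^1$-smooth near $0$. Moreover, if $g$ depends on a parameter $\varepsilon$ and $g''$ is $C^1$-smooth in $\varepsilon$, then $H'$ is also $C^1$-smooth with respect to $\varepsilon$. *)

theory Defs
  imports "HOL-Analysis.Analysis" "HOL-Library.Landau_Symbols"
begin

definition hmap :: "real \<Rightarrow> real" where
  "hmap x = - 1 / ln x"

definition hinv :: "real \<Rightarrow> real" where
  "hinv y = exp (- 1 / y)"

definition Hconj :: "(real \<Rightarrow> real) \<Rightarrow> real \<Rightarrow> real" where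
  "Hconj g x = (if x = 0 then 0 else hinv (g (hmap x)))"

text \<open>A representative on [0,delta) of a C^2 germ g : (R^+,0) -> (R^+,0) with
  g(y) = y + R(y), R(y) = O(y^2); g1, g2 are its first and second derivatives
  (one-sided at 0).\<close>
definition admissible_germ ::
  "real \<Rightarrow> (real \<Rightarrow> real) \<Rightarrow> (real \<Rightarrow> real) \<Rightarrow> (real \<Rightarrow> real) \<Rightarrow> bool" where
  "admissible_germ \<delta> g g1 g2 \<longleftrightarrow>
     \<delta> > 0 \<and> g 0 = 0 \<and> (\<forall>y\<in>{0<..<\<delta>}. g y > 0) \<and>
     (\<forall>y\<in>{0..<\<delta>}. (g has_real_derivative g1 y) (at y within {0..<\<delta>})) \<and>
     (\<forall>y\<in>{0..<\<delta>}. (g1 has_real_derivative g2 y) (at y within {0..<\<delta>})) \<and>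
     continuous_on {0..<\<delta>} g2 \<and>
     (\<lambda>y. g y - y) \<in> O[at_right 0](\<lambda>y. y ^ 2)"

end

theory Submission
  imports Defs
begin
lemma sy_mem: "s \<in> {0..1} \<Longrightarrow> y \<in> {0..<\<delta>} \<Longrightarrow> s * y \<in> {0..<(\<delta>::real)}"
proof -
  assume s: "s \<in> {0..1}" and y: "y \<in> {0..<\<delta>}"
  have "s * y \<le> y" using s y by (intro mult_left_le_one_le) auto
  moreover have "0 \<le> s * y" using s y by simp
  ultimately show ?thesis using y by simp
qed


lemma dist_pair_le: "dist (a::real, b::real) (c, d) \<le> \<bar>a - c\<bar> + \<bar>b - d\<bar>"
  by (simp add: dist_Pair_Pair dist_real_def sqrt_sum_squares_le_sum_abs)

lemma dist_pair_ge1: "\<bar>a - c\<bar> \<le> dist (a::real, b::real) (c, d)"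
  by (metis dist_fst_le dist_real_def fst_conv)
lemma dist_pair_ge2: "\<bar>b - d\<bar> \<le> dist (a::real, b::real) (c, d)"
  by (metis dist_snd_le dist_real_def snd_conv)

lemma joint_cont:
  fixes f fe :: "real \<Rightarrow> real \<Rightarrow> real"
  assumes E: "open E"
    and der: "\<forall>e\<in>E. \<forall>y\<in>Y. ((\<lambda>e. f e y) has_real_derivative fe e y) (at e)"
    and cfe: "continuous_on (E \<times> Y) (\<lambda>(e, y). fe e y)"
    and cf: "\<forall>e\<in>E. continuous_on Y (f e)"
  shows "continuous_on (E \<times> Y) (\<lambda>(e, y). f e y)"
  unfolding continuous_on_iff
proof (intro ballI allI impI)
  fix p and \<epsilon> :: real
  assume p: "p \<in> E \<times> Y" and "\<epsilon> > 0"
  obtain e0 y0 where p0: "p = (e0, y0)" and e0: "e0 \<in> E" and y0: "y0 \<in> Y" using p by auto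
  obtain d1 where d1: "d1 > 0" and d1h: "\<forall>q\<in>E \<times> Y. dist q p < d1 \<longrightarrow>
       dist ((\<lambda>(e, y). fe e y) q) ((\<lambda>(e, y). fe e y) p) < 1"
    using cfe p unfolding continuous_on_iff by (meson zero_less_one)
  obtain r where r: "r > 0" "ball e0 r \<subseteq> E" using E e0 open_contains_ball by blast
  obtain d2 where d2: "d2 > 0" and d2h: "\<forall>y\<in>Y. dist y y0 < d2 \<longrightarrow> dist (f e0 y) (f e0 y0) < \<epsilon>/2"
    using cf e0 y0 \<open>\<epsilon> > 0\<close> unfolding continuous_on_iff by (meson half_gt_zero)
  define M where "M = \<bar>fe e0 y0\<bar> + 1"
  have M: "M > 0" unfolding M_def by simp
  define d where "d = min (min (d1/2) r) (min d2 (\<epsilon>/(2*M)))"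
  have d: "d > 0" using d1 r d2 M \<open>\<epsilon> > 0\<close> by (simp add: d_def)
  show "\<exists>d>0. \<forall>q\<in>E \<times> Y. dist q p < d \<longrightarrow> dist ((\<lambda>(e, y). f e y) q) ((\<lambda>(e, y). f e y) p) < \<epsilon>"
  proof (intro exI[of _ d] conjI ballI impI d)
    fix q assume q: "q \<in> E \<times> Y" "dist q p < d"
    obtain e y where qe: "q = (e, y)" and e: "e \<in> E" and y: "y \<in> Y" using q by auto
    have ee: "\<bar>e - e0\<bar> < d" using q(2) dist_pair_ge1[of e e0 y y0] p0 qe by simp
    have yy: "\<bar>y - y0\<bar> < d" using q(2) dist_pair_ge2[of y y0 e e0] p0 qe by simp
    define S where "S = {min e0 e .. max e0 e}"
    have Sb: "s \<in> S \<Longrightarrow> \<bar>s - e0\<bar> < d" for s using ee by (auto simp: S_def)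
    have SE: "s \<in> S \<Longrightarrow> s \<in> E" for s using Sb[of s] r d_def
      by (smt (verit) dist_real_def mem_ball subset_iff)
    have bnd: "norm (fe s y) \<le> M" if "s \<in> S" for s
    proof -
      have "dist (s, y) (e0, y0) \<le> \<bar>s - e0\<bar> + \<bar>y - y0\<bar>" by (rule dist_pair_le)
      also have "\<dots> < d1" using Sb[OF that] yy d_def by linarith
      finally have "dist (fe s y) (fe e0 y0) < 1" using d1h SE[OF that] y p0 by auto
      then show ?thesis unfolding M_def dist_real_def by simp
    qed
    have "norm (f e y - f e0 y) \<le> M * norm (e - e0)"
    proof (rule field_differentiable_bound[of S "\<lambda>s. f s y" "\<lambda>s. fe s y"])
      show "convex S" by (simp add: S_def)
      show "((\<lambda>s. f s y) has_field_derivative fe z y) (at z within S)" if "z \<in> S" for z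
        using der SE[OF that] y has_field_derivative_at_within by blast
      show "norm (fe z y) \<le> M" if "z \<in> S" for z using bnd that .
      show "e \<in> S" "e0 \<in> S" by (auto simp: S_def)
    qed
    also have "\<dots> \<le> M * d" using ee M by (simp add: mult_left_mono)
    also have "\<dots> \<le> M * (\<epsilon>/(2*M))" using M unfolding d_def
      by (intro mult_left_mono) auto
    also have "\<dots> = \<epsilon>/2" using M by (simp add: field_simps)
    finally have 1: "\<bar>f e y - f e0 y\<bar> \<le> \<epsilon>/2" by simp
    have 2: "\<bar>f e0 y - f e0 y0\<bar> < \<epsilon>/2" using d2h y yy d_def by (simp add: dist_real_def)
    show "dist ((\<lambda>(e, y). f e y) q) ((\<lambda>(e, y). f e y) p) < \<epsilon>"
      using 1 2 qe p0 abs_triangle_ineq[of "f e y - f e0 y" "f e0 y - f e0 y0"] by (simp add: dist_real_def)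
  qed
qed



definition Qint :: "(real \<Rightarrow> real) \<Rightarrow> real \<Rightarrow> real" where
  "Qint g2 y = integral {0..1} (\<lambda>s. (1 - s) * g2 (s * y))"
definition Pint :: "(real \<Rightarrow> real) \<Rightarrow> real \<Rightarrow> real" where
  "Pint g2 y = integral {0..1} (\<lambda>s. g2 (s * y))"

lemma at0_Ico: "(d::real) > 0 \<Longrightarrow> at 0 within {0..<d} = at_right 0"
  by (rule at_within_nhd[where S="{-1<..<d}"]) auto

lemma taylor_int:
  fixes g g1 g2 :: "real \<Rightarrow> real"
  assumes d1: "\<forall>y\<in>{0..<\<delta>}. (g has_real_derivative g1 y) (at y within {0..<\<delta>})"
    and d2: "\<forall>y\<in>{0..<\<delta>}. (g1 has_real_derivative g2 y) (at y within {0..<\<delta>})"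
    and c2: "continuous_on {0..<\<delta>} g2"
    and y: "y \<in> {0..<\<delta>}"
  shows "g y = g 0 + y * g1 0 + y^2 * Qint g2 y" "g1 y = g1 0 + y * Pint g2 y"
proof -
  have sy: "s * y \<in> {0..<\<delta>}" if "s \<in> {0..1}" for s
    using that y by (rule sy_mem)
  have img: "(\<lambda>s. s * y) ` {0..1} \<subseteq> {0..<\<delta>}" using sy by auto
  have dlin: "((\<lambda>s. s * y) has_real_derivative y) (at s within {0..1})" for s
    by (auto intro!: derivative_eq_intros)
  have dg: "((\<lambda>s. g (s * y)) has_real_derivative g1 (s * y) * y) (at s within {0..1})"
    if "s \<in> {0..1}" for s
    using DERIV_image_chain[OF DERIV_subset[OF d1[rule_format, OF sy[OF that]] img] dlin]
    by (simp add: o_def)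
  have dg1: "((\<lambda>s. g1 (s * y)) has_real_derivative g2 (s * y) * y) (at s within {0..1})"
    if "s \<in> {0..1}" for s
    using DERIV_image_chain[OF DERIV_subset[OF d2[rule_format, OF sy[OF that]] img] dlin]
    by (simp add: o_def)
  have cq: "continuous_on {0..1} (\<lambda>s. g2 (s * y))"
    by (rule continuous_on_compose2[OF c2]) (auto intro!: continuous_intros sy)
  have cq2: "continuous_on {0..1} (\<lambda>s. (1 - s) * g2 (s * y))"
    by (intro continuous_intros cq)
  have iq: "((\<lambda>s. (1 - s) * g2 (s * y)) has_integral Qint g2 y) {0..1}"
    unfolding Qint_def using integrable_continuous_interval[OF cq2] by (simp add: integrable_integral)
  have ip: "((\<lambda>s. g2 (s * y)) has_integral Pint g2 y) {0..1}"
    unfolding Pint_def using integrable_continuous_interval[OF cq] by (simp add: integrable_integral)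
  have F: "((\<lambda>s. g (s * y) + (1 - s) * y * g1 (s * y)) has_real_derivative
            y^2 * ((1 - s) * g2 (s * y))) (at s within {0..1})" if "s \<in> {0..1}" for s
  proof -
    have dl: "((\<lambda>s. (1 - s) * y) has_real_derivative (- y)) (at s within {0..1})"
      using DERIV_mult[OF DERIV_diff[OF DERIV_const DERIV_ident] DERIV_const, of 1 y s "{0..1}"] by simp
    have dd: "((\<lambda>s. g (s * y) + (1 - s) * y * g1 (s * y)) has_real_derivative
        g1 (s * y) * y + ((- y) * g1 (s * y) + (g2 (s * y) * y) * ((1 - s) * y))) (at s within {0..1})"
      by (rule DERIV_add[OF dg[OF that] DERIV_mult[OF dl dg1[OF that]]])
    have eq: "g1 (s * y) * y + ((- y) * g1 (s * y) + (g2 (s * y) * y) * ((1 - s) * y))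
        = y^2 * ((1 - s) * g2 (s * y))" by (simp add: algebra_simps power2_eq_square)
    show ?thesis using dd unfolding eq .
  qed
  have F': "((\<lambda>s. g (s * y) + (1 - s) * y * g1 (s * y)) has_vector_derivative
            y^2 * ((1 - s) * g2 (s * y))) (at s within {0..1})" if "s \<in> {0..1}" for s
    using F[OF that] unfolding has_real_derivative_iff_has_vector_derivative .
  have I1: "((\<lambda>s. y^2 * ((1 - s) * g2 (s * y))) has_integral
      ((g (1 * y) + (1 - 1) * y * g1 (1 * y)) - (g (0 * y) + (1 - 0) * y * g1 (0 * y)))) {0..1}"
    using fundamental_theorem_of_calculus[of 0 1, OF _ F'] by simp
  have I2: "((\<lambda>s. y^2 * ((1 - s) * g2 (s * y))) has_integral y^2 * Qint g2 y) {0..1}"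
    by (rule has_integral_mult_right[OF iq])
  have "(g (1 * y) + (1 - 1) * y * g1 (1 * y)) - (g (0 * y) + (1 - 0) * y * g1 (0 * y)) = y^2 * Qint g2 y"
    using has_integral_unique[OF I1 I2] .
  then show "g y = g 0 + y * g1 0 + y^2 * Qint g2 y" by simp
  have dg1': "((\<lambda>s. g1 (s * y)) has_vector_derivative g2 (s * y) * y) (at s within {0..1})"
    if "s \<in> {0..1}" for s
    using dg1[OF that] unfolding has_real_derivative_iff_has_vector_derivative .
  have J1: "((\<lambda>s. g2 (s * y) * y) has_integral (g1 (1 * y) - g1 (0 * y))) {0..1}"
    using fundamental_theorem_of_calculus[of 0 1, OF _ dg1'] by simp
  have J2: "((\<lambda>s. g2 (s * y) * y) has_integral Pint g2 y * y) {0..1}"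
    by (rule has_integral_mult_left[OF ip])
  have "g1 (1 * y) - g1 (0 * y) = Pint g2 y * y"
    using has_integral_unique[OF J1 J2] .
  then show "g1 y = g1 0 + y * Pint g2 y" by (simp add: algebra_simps)
qed

lemma Qint_cont:
  assumes c2: "continuous_on {0..<\<delta>} g2"
  shows "continuous_on {0..<\<delta>} (Qint g2)" "continuous_on {0..<\<delta>} (Pint g2)"
proof -
  have sy: "s * y \<in> {0..<\<delta>}" if "s \<in> {0..1}" "y \<in> {0..<\<delta>}" for s y
    using that by (rule sy_mem)
  have c0: "continuous_on ({0..<\<delta>} \<times> cbox 0 1) (\<lambda>p. g2 (snd p * fst p))"
    by (rule continuous_on_compose2[OF c2]) (auto intro!: continuous_intros sy)
  have c: "continuous_on ({0..<\<delta>} \<times> cbox 0 1) (\<lambda>(y, s). g2 (s * y))"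
    using c0 by (simp add: split_beta)
  have "continuous_on ({0..<\<delta>} \<times> cbox 0 1) (\<lambda>(y, s). (1 - s) * g2 (s * y))"
    using c0 unfolding split_beta by (intro continuous_intros) auto
  from integral_continuous_on_param[OF this]
  show "continuous_on {0..<\<delta>} (Qint g2)" unfolding Qint_def by simp
  from integral_continuous_on_param[OF c]
  show "continuous_on {0..<\<delta>} (Pint g2)" unfolding Pint_def by simp
qed

lemma g1_zero:
  assumes adm: "admissible_germ \<delta> g g1 g2"
  shows "g1 0 = 1"
proof -
  from adm have dp: "\<delta> > 0" and g0: "g 0 = 0"
    and d1: "\<forall>y\<in>{0..<\<delta>}. (g has_real_derivative g1 y) (at y within {0..<\<delta>})"
    and d2: "\<forall>y\<in>{0..<\<delta>}. (g1 has_real_derivative g2 y) (at y within {0..<\<delta>})"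
    and c2: "continuous_on {0..<\<delta>} g2"
    and bo: "(\<lambda>y. g y - y) \<in> O[at_right 0](\<lambda>y. y ^ 2)"
    unfolding admissible_germ_def by auto
  obtain C where C: "C > 0" "eventually (\<lambda>y. norm (g y - y) \<le> C * norm (y^2)) (at_right 0)"
    using landau_o.bigE[OF bo] by blast
  have ev: "eventually (\<lambda>y. y \<in> {0<..<\<delta>}) (at_right (0::real))"
    using eventually_at_right_real[OF dp] by simp
  have qc: "(Qint g2 \<longlongrightarrow> Qint g2 0) (at_right 0)"
  proof -
    have "0 \<in> {0..<\<delta>}" using dp by simp
    then have "(Qint g2 \<longlongrightarrow> Qint g2 0) (at 0 within {0..<\<delta>})"
      using Qint_cont(1)[OF c2] unfolding continuous_on_def by blast
    then show ?thesis unfolding at0_Ico[OF dp] .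
  qed
  have l1: "((\<lambda>y. y * Qint g2 y) \<longlongrightarrow> 0 * Qint g2 0) (at_right 0)"
    by (rule tendsto_mult[OF tendsto_ident_at qc])
  have l2: "((\<lambda>y. (g y - y) / y) \<longlongrightarrow> 0) (at_right 0)"
  proof (rule Lim_null_comparison)
    show "eventually (\<lambda>y. norm ((g y - y) / y) \<le> C * y) (at_right 0)"
      using C(2) ev
    proof eventually_elim
      case (elim y)
      then have "\<bar>g y - y\<bar> \<le> C * y * y" by (simp add: power2_eq_square)
      then show ?case using elim(2) by (simp add: divide_le_eq abs_divide)
    qed
    have "((\<lambda>y. C * y) \<longlongrightarrow> C * 0) (at_right 0)"
      by (rule tendsto_mult[OF tendsto_const tendsto_ident_at])
    then show "((\<lambda>y. C * y) \<longlongrightarrow> 0) (at_right 0)" by simp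
  qed
  have lim: "((\<lambda>y. (g y - y) / y - y * Qint g2 y) \<longlongrightarrow> 0 - 0 * Qint g2 0) (at_right 0)"
    using tendsto_diff[OF l2 l1] by simp
  have evq: "eventually (\<lambda>y. (g y - y) / y - y * Qint g2 y = g1 0 - 1) (at_right 0)"
    using ev
  proof eventually_elim
    case (elim y)
    then have "g y = y * g1 0 + y^2 * Qint g2 y"
      using taylor_int(1)[OF d1 d2 c2, of y] g0 by simp
    then show ?case using elim by (simp add: field_simps power2_eq_square)
  qed
  have "((\<lambda>y. g1 0 - 1) \<longlongrightarrow> 0) (at_right (0::real))"
    using tendsto_cong[OF evq] lim by simp
  then show ?thesis by (simp add: tendsto_const_iff)
qed


lemma hmap_zero [simp]: "hmap 0 = 0" by (simp add: hmap_def)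

lemma hmap_deriv:
  assumes "0 < x" "x < 1"
  shows "(hmap has_real_derivative (hmap x)^2 / x) (at x)"
proof -
  have ln: "ln x < 0" using assms by simp
  have hm: "hmap = (\<lambda>x. - inverse (ln x))"
    by (simp add: hmap_def fun_eq_iff divide_minus_left inverse_eq_divide)
  have d: "((\<lambda>x. - inverse (ln x)) has_real_derivative
      - (- (inverse x * inverse (ln x ^ Suc (Suc 0))))) (at x)"
    using DERIV_minus[OF DERIV_inverse_fun[OF DERIV_ln[OF assms(1)]]] ln by simp
  have "- (- (inverse x * inverse (ln x ^ Suc (Suc 0)))) = (hmap x)^2 / x"
    using ln assms by (simp add: hmap_def power2_eq_square field_simps)
  then show ?thesis using d unfolding hm by simp
qed

lemma hmap_range:
  assumes "\<delta> > 0" "x \<in> {0..<exp (-1/\<delta>)}"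
  shows "hmap x \<in> {0..<\<delta>}"
proof (cases "x = 0")
  case False
  then have x: "0 < x" "x < exp (-1/\<delta>)" using assms by auto
  then have l: "ln x < -1/\<delta>" by (metis ln_exp ln_less_cancel_iff exp_gt_zero)
  have "-1/\<delta> < 0" using assms(1) by simp
  then have l0: "ln x < 0" using l by linarith
  have "-1/ln x < \<delta>" using l l0 assms(1) by (simp add: field_simps)
  then show ?thesis using l0 by (simp add: hmap_def)
qed (use assms in simp)

lemma hmap_exp: "0 < x \<Longrightarrow> x < 1 \<Longrightarrow> exp (- 1 / hmap x) = x"
  by (simp add: hmap_def)

lemma hmap_pos: "0 < x \<Longrightarrow> x < 1 \<Longrightarrow> hmap x > 0"
  by (simp add: hmap_def divide_neg_neg)

lemma hmap_cont:
  assumes "0 < d" "d \<le> 1"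
  shows "continuous_on {0..<d} hmap"
proof -
  have "continuous (at x within {0..<d}) hmap" if x: "x \<in> {0..<d}" for x
  proof (cases "x = 0")
    case True
    have "filterlim (\<lambda>x. - ln x) at_top (at_right (0::real))"
      using ln_at_0 filterlim_uminus_at_top[of "\<lambda>x. - ln x"] by simp
    from tendsto_inverse_0_at_top[OF this]
    have "((\<lambda>x. - 1 / ln x) \<longlongrightarrow> 0) (at_right (0::real))"
      by (simp add: divide_minus_left inverse_eq_divide)
    then show ?thesis using True assms
      by (simp add: continuous_within at0_Ico hmap_def[abs_def])
  next
    case False
    then have "0 < x" "x < 1" using x assms by auto
    then show ?thesis
      using DERIV_isCont[OF hmap_deriv] continuous_at_imp_continuous_within by blast
  qed
  then show ?thesis using continuous_on_eq_continuous_within by blast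
qed




lemma Qint_joint:
  fixes k :: "real \<Rightarrow> real \<Rightarrow> real"
  assumes ck: "continuous_on (E \<times> {0..<\<delta>}) (\<lambda>(e, y). k e y)"
  shows "continuous_on (E \<times> {0..<\<delta>}) (\<lambda>(e, y). Qint (k e) y)"
    "continuous_on (E \<times> {0..<\<delta>}) (\<lambda>(e, y). Pint (k e) y)"
proof -
  have c0: "continuous_on ((E \<times> {0..<\<delta>}) \<times> cbox 0 1)
      (\<lambda>p. (\<lambda>(e, y). k e y) (fst (fst p), snd p * snd (fst p)))"
    by (rule continuous_on_compose2[OF ck]) (auto intro!: continuous_intros sy_mem)
  have c1: "continuous_on ((E \<times> {0..<\<delta>}) \<times> cbox 0 1) (\<lambda>(x, t). k (fst x) (t * snd x))"
    using c0 by (simp add: split_beta)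
  have c2: "continuous_on ((E \<times> {0..<\<delta>}) \<times> cbox 0 1) (\<lambda>(x, t). (1 - t) * k (fst x) (t * snd x))"
    using c0 unfolding split_beta by (intro continuous_intros) auto
  show "continuous_on (E \<times> {0..<\<delta>}) (\<lambda>(e, y). Qint (k e) y)"
    using integral_continuous_on_param[OF c2] by (simp add: Qint_def split_beta)
  show "continuous_on (E \<times> {0..<\<delta>}) (\<lambda>(e, y). Pint (k e) y)"
    using integral_continuous_on_param[OF c1] by (simp add: Pint_def split_beta)
qed

lemma Qint_deriv:
  fixes k ke :: "real \<Rightarrow> real \<Rightarrow> real"
  assumes E: "open E" and e0: "e0 \<in> E" and y: "y \<in> {0..<\<delta>}"
    and ck: "continuous_on (E \<times> {0..<\<delta>}) (\<lambda>(e, y). k e y)"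
    and cke: "continuous_on (E \<times> {0..<\<delta>}) (\<lambda>(e, y). ke e y)"
    and der: "\<forall>e\<in>E. \<forall>y\<in>{0..<\<delta>}. ((\<lambda>e. k e y) has_real_derivative ke e y) (at e)"
  shows "((\<lambda>e. Qint (k e) y) has_real_derivative Qint (ke e0) y) (at e0)"
    "((\<lambda>e. Pint (k e) y) has_real_derivative Pint (ke e0) y) (at e0)"
proof -
  obtain r where r: "r > 0" "ball e0 r \<subseteq> E" using E e0 open_contains_ball by blast
  let ?U = "ball e0 r"
  have e0U: "e0 \<in> ?U" using r by simp
  have atU: "at e0 within ?U = at e0" by (rule at_within_open[OF e0U]) simp
  have ck1: "continuous_on (?U \<times> cbox 0 1) (\<lambda>p. (\<lambda>(e, y). k e y) (fst p, snd p * y))"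
    by (rule continuous_on_compose2[OF ck]) (use r y in \<open>auto intro!: continuous_intros sy_mem\<close>)
  have cke1: "continuous_on (?U \<times> cbox 0 1) (\<lambda>p. (\<lambda>(e, y). ke e y) (fst p, snd p * y))"
    by (rule continuous_on_compose2[OF cke]) (use r y in \<open>auto intro!: continuous_intros sy_mem\<close>)
  have ckx: "continuous_on (cbox 0 1) (\<lambda>t. k x (t * y))" if "x \<in> ?U" for x
  proof -
    have "continuous_on (cbox 0 1) (\<lambda>t. (\<lambda>p. (\<lambda>(e, y). k e y) (fst p, snd p * y)) (x, t))"
      by (rule continuous_on_compose2[OF ck1]) (use that in \<open>auto intro!: continuous_intros\<close>)
    then show ?thesis by simp
  qed
  have dk: "((\<lambda>x. k x (t * y)) has_real_derivative ke x (t * y)) (at x within ?U)"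
    if "x \<in> ?U" "t \<in> cbox 0 1" for x t
  proof -
    have "x \<in> E" using that r by auto
    moreover have "t * y \<in> {0..<\<delta>}" using sy_mem[of t y \<delta>] that y by auto
    ultimately show ?thesis using der has_field_derivative_at_within by blast
  qed
  have "((\<lambda>e. integral (cbox 0 1) (\<lambda>t. (1 - t) * k e (t * y))) has_real_derivative
        integral (cbox 0 1) (\<lambda>t. (1 - t) * ke e0 (t * y))) (at e0 within ?U)"
  proof (rule leibniz_rule_field_derivative[where fx = "\<lambda>x t. (1 - t) * ke x (t * y)"])
    show "((\<lambda>x. (1 - t) * k x (t * y)) has_real_derivative (1 - t) * ke x (t * y)) (at x within ?U)"
      if "x \<in> ?U" "t \<in> cbox 0 1" for x t
      using DERIV_cmult[OF dk[OF that], of "1 - t"] by simp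
    show "(\<lambda>t. (1 - t) * k x (t * y)) integrable_on cbox 0 1" if "x \<in> ?U" for x
      by (rule integrable_continuous) (intro continuous_intros ckx that)
    show "continuous_on (?U \<times> cbox 0 1) (\<lambda>(x, t). (1 - t) * ke x (t * y))"
      using cke1 unfolding split_beta by (intro continuous_intros) auto
  qed (use e0U in auto)
  then show "((\<lambda>e. Qint (k e) y) has_real_derivative Qint (ke e0) y) (at e0)"
    using atU by (simp add: Qint_def)
  have "((\<lambda>e. integral (cbox 0 1) (\<lambda>t. k e (t * y))) has_real_derivative
        integral (cbox 0 1) (\<lambda>t. ke e0 (t * y))) (at e0 within ?U)"
  proof (rule leibniz_rule_field_derivative[where fx = "\<lambda>x t. ke x (t * y)"])
    show "((\<lambda>x. k x (t * y)) has_real_derivative ke x (t * y)) (at x within ?U)"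
      if "x \<in> ?U" "t \<in> cbox 0 1" for x t
      using dk[OF that] .
    show "(\<lambda>t. k x (t * y)) integrable_on cbox 0 1" if "x \<in> ?U" for x
      by (rule integrable_continuous) (intro continuous_intros ckx that)
    show "continuous_on (?U \<times> cbox 0 1) (\<lambda>(x, t). ke x (t * y))"
      using cke1 by (simp add: split_beta)
  qed (use e0U in auto)
  then show "((\<lambda>e. Pint (k e) y) has_real_derivative Pint (ke e0) y) (at e0)"
    using atU by (simp add: Pint_def)
qed

definition PhiF :: "real \<Rightarrow> real \<Rightarrow> real \<Rightarrow> real" where
  "PhiF y q p = exp (q / (1 + y * q)) * (1 + y * p) / (1 + y * q)^2"

definition PhiD :: "real \<Rightarrow> real \<Rightarrow> real \<Rightarrow> real \<Rightarrow> real \<Rightarrow> real" where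
  "PhiD y q p q' p' = PhiF y q p * (q' / (1 + y * q)^2)
     + exp (q / (1 + y * q)) * (y * p') / (1 + y * q)^2
     - 2 * exp (q / (1 + y * q)) * (1 + y * p) * (y * q') / (1 + y * q)^3"

lemma PhiF_deriv:
  assumes dq: "(q has_real_derivative q') (at e0)" and dp: "(p has_real_derivative p') (at e0)"
    and G: "1 + y * q e0 \<noteq> 0"
  shows "((\<lambda>e. PhiF y (q e) (p e)) has_real_derivative PhiD y (q e0) (p e0) q' p') (at e0)"
proof -
  define G0 where "G0 = 1 + y * q e0"
  define X where "X = exp (q e0 / G0)"
  have G0: "G0 \<noteq> 0" using G by (simp add: G0_def)
  have dG: "((\<lambda>e. 1 + y * q e) has_real_derivative y * q') (at e0)"
    using DERIV_add[OF DERIV_const DERIV_cmult[OF dq, of y]] by simp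
  have dK0: "((\<lambda>e. q e / (1 + y * q e)) has_real_derivative (q' * G0 - q e0 * (y * q')) / (G0 * G0)) (at e0)"
    using DERIV_divide[OF dq dG] G unfolding G0_def by simp
  have "q' * G0 - q e0 * (y * q') = q'" unfolding G0_def by (simp add: algebra_simps)
  then have dK: "((\<lambda>e. q e / (1 + y * q e)) has_real_derivative q' / G0^2) (at e0)"
    using dK0 by (simp add: power2_eq_square)
  have dX: "((\<lambda>e. exp (q e / (1 + y * q e))) has_real_derivative X * (q' / G0^2)) (at e0)"
    using DERIV_fun_exp[OF dK] unfolding X_def G0_def by simp
  have dN: "((\<lambda>e. 1 + y * p e) has_real_derivative y * p') (at e0)"
    using DERIV_add[OF DERIV_const DERIV_cmult[OF dp, of y]] by simp
  have dG2: "((\<lambda>e. (1 + y * q e)^2) has_real_derivative 2 * G0 * (y * q')) (at e0)"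
    using DERIV_power[OF dG, of 2] unfolding G0_def by (simp add: algebra_simps)
  have dXN: "((\<lambda>e. exp (q e / (1 + y * q e)) * (1 + y * p e)) has_real_derivative
      X * (q' / G0^2) * (1 + y * p e0) + X * (y * p')) (at e0)"
    using DERIV_mult[OF dX dN] unfolding X_def G0_def by (simp add: mult.commute)
  have dAll: "((\<lambda>e. exp (q e / (1 + y * q e)) * (1 + y * p e) / (1 + y * q e)^2) has_real_derivative
      ((X * (q' / G0^2) * (1 + y * p e0) + X * (y * p')) * G0^2 - X * (1 + y * p e0) * (2 * G0 * (y * q')))
        / (G0^2 * G0^2)) (at e0)"
    using DERIV_divide[OF dXN dG2] G0 unfolding X_def G0_def by (simp add: power2_eq_square)
  have eq: "((X * (q' / G0^2) * (1 + y * p e0) + X * (y * p')) * G0^2 - X * (1 + y * p e0) * (2 * G0 * (y * q')))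
        / (G0^2 * G0^2) = PhiD y (q e0) (p e0) q' p'"
    unfolding PhiD_def PhiF_def G0_def[symmetric] X_def[symmetric] using G0
    by (simp add: field_simps power2_eq_square power3_eq_cube)
  have fe: "(\<lambda>e. PhiF y (q e) (p e)) = (\<lambda>e. exp (q e / (1 + y * q e)) * (1 + y * p e) / (1 + y * q e)^2)"
    by (simp add: PhiF_def fun_eq_iff)
  show ?thesis using dAll[unfolded eq] by (simp add: PhiF_def)
qed

lemma main_param:
  fixes E :: "real set" and \<delta> :: real and g g1 g2 g2e :: "real \<Rightarrow> real \<Rightarrow> real"
  assumes E: "open E"
    and adm: "\<forall>\<epsilon>\<in>E. admissible_germ \<delta> (g \<epsilon>) (g1 \<epsilon>) (g2 \<epsilon>)"
    and der: "\<forall>\<epsilon>\<in>E. \<forall>y\<in>{0..<\<delta>}. ((\<lambda>e. g2 e y) has_real_derivative g2e \<epsilon> y) (at \<epsilon>)"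
    and c2e: "continuous_on (E \<times> {0..<\<delta>}) (\<lambda>(e, y). g2e e y)"
    and Ene: "E \<noteq> {}"
  shows "\<exists>\<delta>'>0. \<exists>H1 H1e.
             (\<forall>\<epsilon>\<in>E. \<forall>x\<in>{0..<\<delta>'}.
                (Hconj (g \<epsilon>) has_real_derivative H1 \<epsilon> x) (at x within {0..<\<delta>'})) \<and>
             (\<forall>\<epsilon>\<in>E. continuous_on {0..<\<delta>'} (H1 \<epsilon>)) \<and>
             (\<forall>\<epsilon>\<in>E. \<forall>x\<in>{0..<\<delta>'}. ((\<lambda>e. H1 e x) has_real_derivative H1e \<epsilon> x) (at \<epsilon>)) \<and>
             continuous_on (E \<times> {0..<\<delta>'}) (\<lambda>(e, x). H1e e x)"
proof -
  obtain e00 where "e00 \<in> E" using Ene by blast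
  then have dp: "\<delta> > 0" using adm unfolding admissible_germ_def by blast
  have g0: "g e 0 = 0" and gpos: "\<forall>y\<in>{0<..<\<delta>}. g e y > 0"
    and d1: "\<forall>y\<in>{0..<\<delta>}. (g e has_real_derivative g1 e y) (at y within {0..<\<delta>})"
    and d2: "\<forall>y\<in>{0..<\<delta>}. (g1 e has_real_derivative g2 e y) (at y within {0..<\<delta>})"
    and c2: "continuous_on {0..<\<delta>} (g2 e)"
    and g10: "g1 e 0 = 1"
    if "e \<in> E" for e
    using adm that g1_zero[of \<delta> "g e" "g1 e" "g2 e"] unfolding admissible_germ_def by auto
  define Q where "Q e y = Qint (g2 e) y" for e y
  define P where "P e y = Pint (g2 e) y" for e y
  define Qe where "Qe e y = Qint (g2e e) y" for e y
  define Pe where "Pe e y = Pint (g2e e) y" for e y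
  define G where "G e y = 1 + y * Q e y" for e y
  have tay: "g e y = y + y^2 * Q e y" "g1 e y = 1 + y * P e y"
    if "e \<in> E" "y \<in> {0..<\<delta>}" for e y
    using taylor_int[OF d1[OF that(1)] d2[OF that(1)] c2[OF that(1)] that(2)] g0[OF that(1)]
      g10[OF that(1)] by (simp_all add: Q_def P_def)
  have Gpos: "G e y > 0" if "e \<in> E" "y \<in> {0..<\<delta>}" for e y
  proof (cases "y = 0")
    case False
    then have "y > 0" "g e y > 0" using that gpos by auto
    moreover have "g e y = y * G e y" using tay[OF that] by (simp add: G_def power2_eq_square algebra_simps)
    ultimately show ?thesis by (simp add: zero_less_mult_iff)
  qed (simp add: G_def)
  have cg2: "continuous_on (E \<times> {0..<\<delta>}) (\<lambda>(e, y). g2 e y)"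
    by (rule joint_cont[OF E der c2e]) (use c2 in auto)
  have cQ: "continuous_on (E \<times> {0..<\<delta>}) (\<lambda>p. Q (fst p) (snd p))"
    using Qint_joint(1)[OF cg2] by (simp add: Q_def split_beta)
  have cP: "continuous_on (E \<times> {0..<\<delta>}) (\<lambda>p. P (fst p) (snd p))"
    using Qint_joint(2)[OF cg2] by (simp add: P_def split_beta)
  have cQe: "continuous_on (E \<times> {0..<\<delta>}) (\<lambda>p. Qe (fst p) (snd p))"
    using Qint_joint(1)[OF c2e] by (simp add: Qe_def split_beta)
  have cPe: "continuous_on (E \<times> {0..<\<delta>}) (\<lambda>p. Pe (fst p) (snd p))"
    using Qint_joint(2)[OF c2e] by (simp add: Pe_def split_beta)
  define d' where "d' = exp (-1/\<delta>)"
  have d'0: "d' > 0" and d'1: "d' < 1" using dp by (auto simp: d'_def)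
  have hr: "hmap x \<in> {0..<\<delta>}" if "x \<in> {0..<d'}" for x
    using hmap_range[OF dp] that by (simp add: d'_def)
  have chm: "continuous_on {0..<d'} hmap" using hmap_cont[OF d'0] d'1 by simp
  define H1 where "H1 e x = PhiF (hmap x) (Q e (hmap x)) (P e (hmap x))" for e x
  define H1e where "H1e e x = PhiD (hmap x) (Q e (hmap x)) (P e (hmap x))
      (Qe e (hmap x)) (Pe e (hmap x))" for e x
  have cPhiD: "continuous_on (E \<times> {0..<\<delta>}) (\<lambda>p. PhiD (snd p) (Q (fst p) (snd p)) (P (fst p) (snd p))
      (Qe (fst p) (snd p)) (Pe (fst p) (snd p)))"
    unfolding PhiD_def PhiF_def
    using Gpos unfolding G_def
    by (intro continuous_intros cQ cP cQe cPe) (auto simp: less_le)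
  have cmap: "continuous_on (E \<times> {0..<d'}) (\<lambda>p. (fst p, hmap (snd p)))"
    by (intro continuous_intros continuous_on_compose2[OF chm]) auto
  have c4: "continuous_on (E \<times> {0..<d'}) (\<lambda>(e, x). H1e e x)"
  proof -
    have sub: "(\<lambda>p. (fst p, hmap (snd p))) ` (E \<times> {0..<d'}) \<subseteq> E \<times> {0..<\<delta>}"
      using hr by auto
    show ?thesis using continuous_on_compose2[OF cPhiD cmap sub]
      by (simp add: H1e_def split_beta)
  qed
  have c3: "continuous_on {0..<d'} (H1 e)" if e: "e \<in> E" for e
  proof -
    have cPhi: "continuous_on (E \<times> {0..<\<delta>}) (\<lambda>p. PhiF (snd p) (Q (fst p) (snd p)) (P (fst p) (snd p)))"
      unfolding PhiF_def
      using Gpos unfolding G_def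
      by (intro continuous_intros cQ cP) (auto simp: less_le)
    have cm: "continuous_on {0..<d'} (\<lambda>x. (e, hmap x))"
      by (intro continuous_intros chm)
    have sub: "(\<lambda>x. (e, hmap x)) ` {0..<d'} \<subseteq> E \<times> {0..<\<delta>}" using hr e by auto
    show ?thesis
      using continuous_on_compose2[OF cPhi cm sub] by (simp add: H1_def)
  qed
  have c5: "((\<lambda>e. H1 e x) has_real_derivative H1e e0 x) (at e0)"
    if e0: "e0 \<in> E" and x: "x \<in> {0..<d'}" for e0 x
  proof -
    have y: "hmap x \<in> {0..<\<delta>}" using hr[OF x] .
    have dQ: "((\<lambda>e. Q e (hmap x)) has_real_derivative Qe e0 (hmap x)) (at e0)"
      using Qint_deriv(1)[OF E e0 y cg2 c2e der] by (simp add: Q_def Qe_def)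
    have dP: "((\<lambda>e. P e (hmap x)) has_real_derivative Pe e0 (hmap x)) (at e0)"
      using Qint_deriv(2)[OF E e0 y cg2 c2e der] by (simp add: P_def Pe_def)
    show ?thesis unfolding H1_def H1e_def
      by (rule PhiF_deriv[OF dQ dP]) (use Gpos[OF e0 y] in \<open>simp add: G_def\<close>)
  qed
  have c1: "(Hconj (g e) has_real_derivative H1 e x) (at x within {0..<d'})"
    if e: "e \<in> E" and x: "x \<in> {0..<d'}" for e x
  proof -
    define K where "K x = exp (Q e (hmap x) / G e (hmap x))" for x
    have Hform: "Hconj (g e) x = x * K x" if "x \<in> {0<..<d'}" for x
    proof -
      have x0: "0 < x" "x < 1" using that d'1 by auto
      let ?y = "hmap x"
      have y: "?y \<in> {0..<\<delta>}" "?y > 0" using hr[of x] that hmap_pos[OF x0] by auto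
      have Gp: "G e ?y > 0" using Gpos[OF e y(1)] .
      have "g e ?y = ?y * G e ?y" using tay[OF e y(1)] by (simp add: G_def power2_eq_square algebra_simps)
      then have "- 1 / g e ?y = - 1 / ?y + Q e ?y / G e ?y"
        using Gp y(2) by (simp add: field_simps G_def)
      then have "exp (- 1 / g e ?y) = exp (- 1 / ?y) * K x"
        by (simp add: K_def exp_diff exp_minus field_simps)
      then show ?thesis using hmap_exp[OF x0] x0 by (simp add: Hconj_def hinv_def)
    qed
    show ?thesis
    proof (cases "x = 0")
      case True
      have cK: "continuous_on {0..<d'} K"
      proof -
        have cKK: "continuous_on (E \<times> {0..<\<delta>}) (\<lambda>p. exp (Q (fst p) (snd p) / G (fst p) (snd p)))"
          unfolding G_def using Gpos unfolding G_def
          by (intro continuous_intros cQ) (auto simp: less_le)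
        have cm: "continuous_on {0..<d'} (\<lambda>x. (e, hmap x))"
          by (intro continuous_intros chm)
        have sub: "(\<lambda>x. (e, hmap x)) ` {0..<d'} \<subseteq> E \<times> {0..<\<delta>}" using hr e by auto
        show ?thesis
          using continuous_on_compose2[OF cKK cm sub] by (simp add: K_def)
      qed
      then have "(K \<longlongrightarrow> K 0) (at 0 within {0..<d'})"
        using d'0 unfolding continuous_on_def by auto
      moreover have "K 0 = H1 e 0"
        by (simp add: K_def H1_def PhiF_def G_def)
      moreover have "eventually (\<lambda>z. K z = (Hconj (g e) z - Hconj (g e) 0) / (z - 0)) (at 0 within {0..<d'})"
        unfolding eventually_at_filter
      proof (rule always_eventually, intro allI impI)
        fix z assume z: "z \<noteq> 0" "z \<in> {0..<d'}"
        then have "z \<in> {0<..<d'}" by auto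
        from Hform[OF this] z show "K z = (Hconj (g e) z - Hconj (g e) 0) / (z - 0)"
          by (simp add: Hconj_def)
      qed
      ultimately have "((\<lambda>z. (Hconj (g e) z - Hconj (g e) 0) / (z - 0)) \<longlongrightarrow> H1 e 0) (at 0 within {0..<d'})"
        using tendsto_cong by fastforce
      then show ?thesis using True by (simp add: has_field_derivative_iff)
    next
      case False
      then have x0: "0 < x" "x < d'" "x < 1" using x d'1 by auto
      let ?y = "hmap x"
      have y: "?y \<in> {0..<\<delta>}" "?y > 0" using hr x hmap_pos[OF x0(1,3)] by auto
      have yi: "?y \<in> interior {0..<\<delta>}" using y by simp
      have dg: "(g e has_real_derivative g1 e ?y) (at ?y)"
        using d1[OF e] y(1) at_within_interior[OF yi] by metis
      have gp: "g e ?y > 0" using gpos[OF e] y by auto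
      have dcomp: "((\<lambda>z. g e (hmap z)) has_real_derivative g1 e ?y * (?y^2 / x)) (at x)"
        using DERIV_chain2[OF dg hmap_deriv[OF x0(1,3)]] .
      have dinv: "((\<lambda>z. - 1 / g e (hmap z)) has_real_derivative
          (g1 e ?y * (?y^2 / x)) / (g e ?y)^2) (at x)"
        using DERIV_minus[OF DERIV_inverse_fun[OF dcomp]] gp by (simp add: inverse_eq_divide power2_eq_square)
      have dH: "((\<lambda>z. exp (- 1 / g e (hmap z))) has_real_derivative
          exp (- 1 / g e ?y) * ((g1 e ?y * (?y^2 / x)) / (g e ?y)^2)) (at x)"
        using DERIV_fun_exp[OF dinv] .
      have eq: "exp (- 1 / g e ?y) * ((g1 e ?y * (?y^2 / x)) / (g e ?y)^2) = H1 e x"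
      proof -
        have Gp: "G e ?y > 0" using Gpos[OF e y(1)] .
        have gG: "g e ?y = ?y * G e ?y" using tay[OF e y(1)] by (simp add: G_def power2_eq_square algebra_simps)
        have "exp (- 1 / g e ?y) = x * K x" using Hform[of x] x0 by (simp add: Hconj_def hinv_def)
        moreover have "g1 e ?y = 1 + ?y * P e ?y" using tay[OF e y(1)] by simp
        ultimately show ?thesis using Gp y(2) x0 gG
          by (simp add: H1_def PhiF_def K_def G_def[symmetric] field_simps power2_eq_square)
      qed
      have "(Hconj (g e) has_real_derivative H1 e x) (at x)"
      proof (rule has_field_derivative_transform_within_open[OF dH[unfolded eq], of "{0<..<1}"])
        show "z \<in> {0<..<1} \<Longrightarrow> exp (- 1 / g e (hmap z)) = Hconj (g e) z" for z
          by (simp add: Hconj_def hinv_def)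
      qed (use x0 in auto)
      then show ?thesis by (rule has_field_derivative_at_within)
    qed
  qed
  show ?thesis
    by (intro exI[of _ d'] exI[of _ H1] exI[of _ H1e] conjI d'0 ballI c1 c3 c4 c5) auto
qed

theorem proposition1:
  shows "(\<forall>\<delta> g g1 g2. admissible_germ \<delta> g g1 g2 \<longrightarrow>
            (\<exists>\<delta>'>0. \<exists>H1.
               (\<forall>x\<in>{0..<\<delta>'}. (Hconj g has_real_derivative H1 x) (at x within {0..<\<delta>'})) \<and>
               continuous_on {0..<\<delta>'} H1))
       \<and>
       (\<forall>(E::real set) \<delta> (g::real \<Rightarrow> real \<Rightarrow> real) g1 g2 g2e.
          open E \<and>
          (\<forall>\<epsilon>\<in>E. admissible_germ \<delta> (g \<epsilon>) (g1 \<epsilon>) (g2 \<epsilon>)) \<and>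
          (\<forall>\<epsilon>\<in>E. \<forall>y\<in>{0..<\<delta>}. ((\<lambda>e. g2 e y) has_real_derivative g2e \<epsilon> y) (at \<epsilon>)) \<and>
          continuous_on (E \<times> {0..<\<delta>}) (\<lambda>(e, y). g2e e y)
          \<longrightarrow>
          (\<exists>\<delta>'>0. \<exists>H1 H1e.
             (\<forall>\<epsilon>\<in>E. \<forall>x\<in>{0..<\<delta>'}.
                (Hconj (g \<epsilon>) has_real_derivative H1 \<epsilon> x) (at x within {0..<\<delta>'})) \<and>
             (\<forall>\<epsilon>\<in>E. continuous_on {0..<\<delta>'} (H1 \<epsilon>)) \<and>
             (\<forall>\<epsilon>\<in>E. \<forall>x\<in>{0..<\<delta>'}. ((\<lambda>e. H1 e x) has_real_derivative H1e \<epsilon> x) (at \<epsilon>)) \<and>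
             continuous_on (E \<times> {0..<\<delta>'}) (\<lambda>(e, x). H1e e x)))"
proof (intro conjI allI impI)
  fix \<delta> and g g1 g2 :: "real \<Rightarrow> real"
  assume adm: "admissible_germ \<delta> g g1 g2"
  have "\<exists>\<delta>'>0. \<exists>H1 H1e.
             (\<forall>\<epsilon>\<in>(UNIV::real set). \<forall>x\<in>{0..<\<delta>'}.
                (Hconj ((\<lambda>e. g) \<epsilon>) has_real_derivative H1 \<epsilon> x) (at x within {0..<\<delta>'})) \<and>
             (\<forall>\<epsilon>\<in>(UNIV::real set). continuous_on {0..<\<delta>'} (H1 \<epsilon>)) \<and>
             (\<forall>\<epsilon>\<in>(UNIV::real set). \<forall>x\<in>{0..<\<delta>'}. ((\<lambda>e. H1 e x) has_real_derivative H1e \<epsilon> x) (at \<epsilon>)) \<and>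
             continuous_on (UNIV \<times> {0..<\<delta>'}) (\<lambda>(e, x). H1e e x)"
    by (rule main_param[of UNIV \<delta> "\<lambda>e. g" "\<lambda>e. g1" "\<lambda>e. g2" "\<lambda>e y. 0"])
       (use adm in auto)
  then obtain \<delta>' H1 where "\<delta>' > 0"
    and "\<forall>x\<in>{0..<\<delta>'}. (Hconj g has_real_derivative H1 (0::real) x) (at x within {0..<\<delta>'})"
    and "continuous_on {0..<\<delta>'} (H1 0)"
    by blast
  then show "\<exists>\<delta>'>0. \<exists>H1.
               (\<forall>x\<in>{0..<\<delta>'}. (Hconj g has_real_derivative H1 x) (at x within {0..<\<delta>'})) \<and>
               continuous_on {0..<\<delta>'} H1" by blast
next
  fix E :: "real set" and \<delta> and g g1 g2 g2e :: "real \<Rightarrow> real \<Rightarrow> real"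
  assume h: "open E \<and>
          (\<forall>\<epsilon>\<in>E. admissible_germ \<delta> (g \<epsilon>) (g1 \<epsilon>) (g2 \<epsilon>)) \<and>
          (\<forall>\<epsilon>\<in>E. \<forall>y\<in>{0..<\<delta>}. ((\<lambda>e. g2 e y) has_real_derivative g2e \<epsilon> y) (at \<epsilon>)) \<and>
          continuous_on (E \<times> {0..<\<delta>}) (\<lambda>(e, y). g2e e y)"
  show "\<exists>\<delta>'>0. \<exists>H1 H1e.
             (\<forall>\<epsilon>\<in>E. \<forall>x\<in>{0..<\<delta>'}.
                (Hconj (g \<epsilon>) has_real_derivative H1 \<epsilon> x) (at x within {0..<\<delta>'})) \<and>
             (\<forall>\<epsilon>\<in>E. continuous_on {0..<\<delta>'} (H1 \<epsilon>)) \<and>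
             (\<forall>\<epsilon>\<in>E. \<forall>x\<in>{0..<\<delta>'}. ((\<lambda>e. H1 e x) has_real_derivative H1e \<epsilon> x) (at \<epsilon>)) \<and>
             continuous_on (E \<times> {0..<\<delta>'}) (\<lambda>(e, x). H1e e x)"
  proof (cases "E = {}")
    case True
    show ?thesis
      by (rule exI[of _ 1]) (simp add: True)
  next
    case False
    show ?thesis using main_param[of E \<delta> g g1 g2 g2e] h False by blast
  qed
qed

end
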